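(* Let $\mathbf{A}=[\mathbf{a}_1,\dots,\mathbf{a}_L]\in\mathbb{C}^{N\times L}$ have unit-norm columns, and let $\mu=\max_{p\neq q}|\langle \mathbf{a}_p,\mathbf{a}_q\rangle|$ be its mutual coherence, assumed to satisfy $\mu>0$. Let $K$ be a positive integer with $K<\tfrac12(\mu^{-1}+1)$, let $\mathcal{S}\subset\{1,\dots,L\}$ with $|\mathcal{S}|=K$, and let $\mathbf{x}\in\mathbb{C}^L$ be given by $x_i=1$ for $i\in\mathcal{S}$ and $x_i=0$ otherwise (the case $M=1$, i.e. constellation $\mathcal{B}=\{1\}$). Let the observation be noiseless, $\mathbf{y}=\mathbf{A}\mathbf{x}=\sum_{i\in\mathcal{S}}\mathbf{a}_i$. Then the Match and Decode (MAD) algorithm with $M=1$ (defined in the context), run with inputs $\mathbf{A},\mathbf{y},K$ and no partial information, outputs $\hat{\mathbf{x}}^{(K)}=\mathbf{x}$; in particular the recovered codeword $\hat{\mathbf{s}}=\mathbf{A}\hat{\mathbf{x}}^{(K)}$ equals the transmitted codeword $\mathbf{s}=\mathbf{A}\mathbf{x}$.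
   Context: Inner product: $\langle \mathbf{u},\mathbf{v}\rangle=\mathbf{v}^*\mathbf{u}$ on $\mathbb{C}^N$. MAD algorithm with $M=1$ (constellation $\mathcal{B}=\{1\}$): initialize $t=0$, $\hat{\mathcal{S}}=\emptyset$, residual $\mathbf{r}^{(0)}=\mathbf{y}$, estimate $\hat{\mathbf{x}}^{(0)}=\mathbf{0}$. While $t<K$: compute $c_i=\langle \mathbf{r}^{(t)},\mathbf{a}_i\rangle$ for $i\notin\hat{\mathcal{S}}$ and the metric $p_i=\mathrm{Re}\{c_i\}-\tfrac12$; select $\hat i=\arg\max_{i\notin\hat{\mathcal{S}}}p_i$; update $\hat{\mathcal{S}}\leftarrow\hat{\mathcal{S}}\cup\{\hat i\}$, $\hat{\mathbf{x}}^{(t+1)}=\hat{\mathbf{x}}^{(t)}+\mathbf{e}_{\hat i}$ ($\mathbf{e}_n$ the $n$-th standard basis vector of $\mathbb{C}^L$), $\mathbf{r}^{(t+1)}=\mathbf{r}^{(t)}-\mathbf{a}_{\hat i}$, and $t\leftarrow t+1$. Output $\hat{\mathbf{x}}^{(K)}$. *)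

theory Defs
  imports "HOL-Analysis.Analysis"
begin

text \<open>Vectors of C^N are modelled as complex^'n ('n a finite index type, N = CARD('n)).
  The dictionary A = [a_1,...,a_L] is a function from column indices {1..L} to complex^'n.
  Vectors of C^L are functions nat => complex, only meaningful on {1..L}.\<close>

definition cinner :: "complex^'n \<Rightarrow> complex^'n \<Rightarrow> complex" where
  "cinner u v = (\<Sum>j\<in>UNIV. cnj (v $ j) * u $ j)"

definition mutual_coherence :: "(nat \<Rightarrow> complex^'n) \<Rightarrow> nat \<Rightarrow> real" where
  "mutual_coherence A L =
     Max ((\<lambda>(p,q). cmod (cinner (A p) (A q))) ` {(p,q). p \<in> {1..L} \<and> q \<in> {1..L} \<and> p \<noteq> q})"

definition mat_vec :: "(nat \<Rightarrow> complex^'n) \<Rightarrow> nat \<Rightarrow> (nat \<Rightarrow> complex) \<Rightarrow> complex^'n" where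
  "mat_vec A L x = (\<Sum>i=1..L. x i *s A i)"

definition std_basis :: "nat \<Rightarrow> nat \<Rightarrow> complex" where
  "std_basis n = (\<lambda>k. if k = n then 1 else 0)"

definition mad_sel :: "nat list \<Rightarrow> nat \<Rightarrow> nat set" where
  "mad_sel is t = set (take t is)"

definition mad_xhat :: "nat list \<Rightarrow> nat \<Rightarrow> nat \<Rightarrow> complex" where
  "mad_xhat is t = (\<lambda>k. (\<Sum>s\<leftarrow>take t is. std_basis s k))"

definition mad_res :: "(nat \<Rightarrow> complex^'n) \<Rightarrow> complex^'n \<Rightarrow> nat list \<Rightarrow> nat \<Rightarrow> complex^'n" where
  "mad_res A y is t = y - (\<Sum>s\<leftarrow>take t is. A s)"

definition mad_metric :: "(nat \<Rightarrow> complex^'n) \<Rightarrow> complex^'n \<Rightarrow> nat \<Rightarrow> real" where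
  "mad_metric A r i = Re (cinner r (A i)) - 1/2"

text \<open>A (possible) run of MAD with M = 1: the list of indices selected in iterations
  t = 0..K-1, each being an argmax (any tie-breaking) of the metric over the unselected indices.\<close>
definition mad_run :: "(nat \<Rightarrow> complex^'n) \<Rightarrow> nat \<Rightarrow> complex^'n \<Rightarrow> nat \<Rightarrow> nat list \<Rightarrow> bool" where
  "mad_run A L y K is \<longleftrightarrow> length is = K \<and>
     (\<forall>t<K. is ! t \<in> {1..L} - mad_sel is t \<and>
        (\<forall>j \<in> {1..L} - mad_sel is t.
           mad_metric A (mad_res A y is t) j \<le> mad_metric A (mad_res A y is t) (is ! t)))"

end

theory Submission
  imports Defs
begin

lemma cinner_sum_left: "cinner (sum f F) v = (\<Sum>i\<in>F. cinner (f i) v)"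
  unfolding cinner_def by (simp add: sum_distrib_left sum.swap[of _ F])

lemma cinner_self: "cinner u u = complex_of_real ((norm u)^2)"
proof -
  have "(norm u)^2 = (\<Sum>j\<in>UNIV. (cmod (u $ j))^2)"
    unfolding norm_vec_def L2_set_def by (simp add: sum_nonneg)
  hence "complex_of_real ((norm u)^2) = (\<Sum>j\<in>UNIV. complex_of_real ((cmod (u $ j))^2))"
    by simp
  also have "\<dots> = cinner u u" unfolding cinner_def
    by (rule sum.cong) (auto simp flip: of_real_power simp: complex_norm_square mult.commute)
  finally show ?thesis by simp
qed

lemma greedy_exists:
  fixes A :: "nat \<Rightarrow> complex^'n"
  assumes "K \<le> L"
  shows "t \<le> K \<Longrightarrow> \<exists>xs. length xs = t \<and> (\<forall>t'<t. xs ! t' \<in> {1..L} - mad_sel xs t' \<and>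
        (\<forall>j \<in> {1..L} - mad_sel xs t'.
           mad_metric A (mad_res A y xs t') j \<le> mad_metric A (mad_res A y xs t') (xs ! t')))"
proof (induction t)
  case 0
  then show ?case by auto
next
  case (Suc t)
  then obtain xs where len: "length xs = t" and P: "\<forall>t'<t. xs ! t' \<in> {1..L} - mad_sel xs t' \<and>
        (\<forall>j \<in> {1..L} - mad_sel xs t'.
           mad_metric A (mad_res A y xs t') j \<le> mad_metric A (mad_res A y xs t') (xs ! t'))"
    by auto
  define F where "F = {1..L} - set xs"
  define g where "g = (\<lambda>j. mad_metric A (mad_res A y xs t) j)"
  have "card (set xs) \<le> t" using len card_length by metis
  hence "card (set xs) < card {1..L}" using Suc.prems assms by simp
  hence "F \<noteq> {}" unfolding F_def
  proof (intro notI)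
    assume c: "card (set xs) < card {1..L}" and e: "{1..L} - set xs = {}"
    hence "{1..L} \<subseteq> set xs" by blast
    hence "card {1..L} \<le> card (set xs)" by (rule card_mono[rotated]) simp
    thus False using c by simp
  qed
  have fF: "finite F" unfolding F_def by simp
  obtain i where iF: "i \<in> F" and im: "g i = Max (g ` F)"
  proof -
    have "Max (g ` F) \<in> g ` F" using Max_in[of "g ` F"] \<open>F \<noteq> {}\<close> fF by auto
    then show ?thesis using that by (metis imageE)
  qed
  have ge: "\<forall>j\<in>F. g j \<le> g i" using im fF by auto
  define xs' where "xs' = xs @ [i]"
  have tk: "t' \<le> t \<Longrightarrow> take t' xs' = take t' xs" for t' using len unfolding xs'_def by simp
  have nth: "t' < t \<Longrightarrow> xs' ! t' = xs ! t'" for t' using len unfolding xs'_def by (simp add: nth_append)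
  have tt: "take t xs = xs" using len by simp
  show ?case
  proof (rule exI[of _ xs'], rule conjI)
    show "length xs' = Suc t" using len xs'_def by simp
  next
    show "\<forall>t'<Suc t. xs' ! t' \<in> {1..L} - mad_sel xs' t' \<and>
        (\<forall>j \<in> {1..L} - mad_sel xs' t'.
           mad_metric A (mad_res A y xs' t') j \<le> mad_metric A (mad_res A y xs' t') (xs' ! t'))"
    proof (intro allI impI)
    fix t' assume "t' < Suc t"
    show "xs' ! t' \<in> {1..L} - mad_sel xs' t' \<and>
        (\<forall>j \<in> {1..L} - mad_sel xs' t'.
           mad_metric A (mad_res A y xs' t') j \<le> mad_metric A (mad_res A y xs' t') (xs' ! t'))"
    proof (cases "t' < t")
      case True
      then show ?thesis using P nth tk[of t'] unfolding mad_sel_def mad_res_def by auto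
    next
      case False
      hence "t' = t" using \<open>t' < Suc t\<close> by simp
      moreover have "xs' ! t = i" using len xs'_def by (simp add: nth_append)
      ultimately show ?thesis using iF ge tk[of t] tt unfolding mad_sel_def mad_res_def F_def g_def
        by auto
    qed
    qed
  qed
qed

theorem lemma1:
  fixes A :: "nat \<Rightarrow> complex^'n" and L K :: nat and S :: "nat set"
    and x :: "nat \<Rightarrow> complex" and y :: "complex^'n"
  assumes unit: "\<forall>i\<in>{1..L}. norm (A i) = 1"
    and mu_pos: "mutual_coherence A L > 0"
    and K_pos: "K > 0"
    and K_bound: "real K < (1 / mutual_coherence A L + 1) / 2"
    and S_sub: "S \<subseteq> {1..L}" and S_card: "card S = K"
    and x_def: "x = (\<lambda>i. if i \<in> S then 1 else 0)"
    and y_def: "y = mat_vec A L x"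
  shows "(\<exists>is. mad_run A L y K is) \<and>
         (\<forall>is. mad_run A L y K is \<longrightarrow>
            (\<forall>k\<in>{1..L}. mad_xhat is K k = x k) \<and>
            mat_vec A L (mad_xhat is K) = mat_vec A L x)"
proof -
  define \<mu> where "\<mu> = mutual_coherence A L"
  have finS: "finite S" using S_sub finite_subset by blast
  have KL: "K \<le> L" using S_card S_sub card_mono[of "{1..L}" S] by simp
  have coh: "cmod (cinner (A p) (A q)) \<le> \<mu>" if "p \<in> {1..L}" "q \<in> {1..L}" "p \<noteq> q" for p q
  proof -
    have fin: "finite {(p,q). p \<in> {1..L} \<and> q \<in> {1..L} \<and> p \<noteq> (q::nat)}"
      by (rule finite_subset[of _ "{1..L} \<times> {1..L}"]) auto
    show ?thesis unfolding \<mu>_def mutual_coherence_def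
      by (rule Max_ge) (use fin that in auto)
  qed
  have self: "cinner (A p) (A p) = 1" if "p \<in> {1..L}" for p
    using unit that cinner_self[of "A p"] by simp
  have key: "(2 * real K - 1) * \<mu> < 1"
  proof -
    have "2 * real K - 1 < 1 / \<mu>" using K_bound \<mu>_def by simp
    hence "(2 * real K - 1) * \<mu> < (1/\<mu>) * \<mu>" using mu_pos \<mu>_def mult_strict_right_mono by blast
    thus ?thesis using mu_pos \<mu>_def by simp
  qed
  have ysum: "y = sum A S"
  proof -
    have "y = (\<Sum>i\<in>{1..L}. if i \<in> S then A i else 0)"
      unfolding y_def mat_vec_def x_def by (rule sum.cong) auto
    also have "\<dots> = sum A ({1..L} \<inter> S)" by (simp add: sum.inter_restrict)
    also have "{1..L} \<inter> S = S" using S_sub by blast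
    finally show ?thesis .
  qed
  have reres: "Re (cinner (sum A R) (A j)) = (\<Sum>i\<in>R. Re (cinner (A i) (A j)))" for R j
    by (simp add: cinner_sum_left)
  have lowb: "Re (cinner (sum A R) (A j)) \<ge> 1 - (real (card R) - 1) * \<mu>"
    if "R \<subseteq> {1..L}" "j \<in> R" for R j
  proof -
    have fR: "finite R" using that finite_subset by blast
    have "(\<Sum>i\<in>R. Re (cinner (A i) (A j))) = Re (cinner (A j) (A j)) + (\<Sum>i\<in>R-{j}. Re (cinner (A i) (A j)))"
      using sum.remove[OF fR that(2)] by simp
    moreover have "Re (cinner (A j) (A j)) = 1" using self that by auto
    moreover have "of_nat (card (R-{j})) * (-\<mu>) \<le> (\<Sum>i\<in>R-{j}. Re (cinner (A i) (A j)))"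
    proof (rule sum_bounded_below)
      fix i assume i: "i \<in> R - {j}"
      have "i \<in> {1..L}" "j \<in> {1..L}" using i that by blast+
      hence "cmod (cinner (A i) (A j)) \<le> \<mu>" using coh[of i j] i by blast
      thus "- \<mu> \<le> Re (cinner (A i) (A j))" using abs_Re_le_cmod[of "cinner (A i) (A j)"] by linarith
    qed
    moreover have "card (R-{j}) = card R - 1" using fR that by simp
    moreover have "card R \<noteq> 0" using fR that(2) by auto
    ultimately have "Re (cinner (sum A R) (A j)) \<ge> 1 + real (card R - 1) * (-\<mu>)"
      using reres[of R j] by simp
    moreover have "real (card R - 1) = real (card R) - 1" using \<open>card R \<noteq> 0\<close> by simp
    ultimately show ?thesis by (simp add: algebra_simps)
  qed
  have upb: "Re (cinner (sum A R) (A j)) \<le> real (card R) * \<mu>"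
    if "R \<subseteq> {1..L}" "j \<in> {1..L}" "j \<notin> R" for R j
  proof -
    have "(\<Sum>i\<in>R. Re (cinner (A i) (A j))) \<le> of_nat (card R) * \<mu>"
    proof (rule sum_bounded_above)
      fix i assume i: "i \<in> R"
      have "i \<in> {1..L}" "i \<noteq> j" using i that by blast+
      hence "cmod (cinner (A i) (A j)) \<le> \<mu>" using coh[of i j] that by blast
      thus "Re (cinner (A i) (A j)) \<le> \<mu>" using abs_Re_le_cmod[of "cinner (A i) (A j)"] by linarith
    qed
    thus ?thesis using reres by simp
  qed
  have correct: "distinct xs \<and> set xs = S" if run: "mad_run A L y K xs" for xs
  proof -
    have len: "length xs = K" using run mad_run_def by blast
    have inv: "t \<le> K \<Longrightarrow> distinct (take t xs) \<and> set (take t xs) \<subseteq> S" for t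
    proof (induction t)
      case 0 then show ?case by simp
    next
      case (Suc t)
      hence tK: "t < K" and IH: "distinct (take t xs)" "set (take t xs) \<subseteq> S" by auto
      define T where "T = set (take t xs)"
      define R where "R = S - T"
      have cT: "card T = t" using IH len tK unfolding T_def by (simp add: distinct_card)
      have cR: "card R = K - t" unfolding R_def using IH T_def finS cT S_card
        by (simp add: card_Diff_subset finite_subset)
      have RL: "R \<subseteq> {1..L}" using S_sub R_def by auto
      have res: "mad_res A y xs t = sum A R"
      proof -
        have "mad_res A y xs t = sum A S - sum A T"
          unfolding mad_res_def ysum T_def using IH by (simp add: sum_list_distinct_conv_sum_set)
        also have "\<dots> = sum A R" unfolding R_def using IH T_def finS
          by (simp add: sum_diff finite_subset)
        finally show ?thesis .
      qed
      have step: "xs ! t \<in> {1..L} - T" and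
        mx: "\<forall>j \<in> {1..L} - T. mad_metric A (sum A R) j \<le> mad_metric A (sum A R) (xs ! t)"
        using run tK res unfolding mad_run_def mad_sel_def T_def by auto
      have inS: "xs ! t \<in> S"
      proof (rule ccontr)
        assume nS: "xs ! t \<notin> S"
        have "R \<noteq> {}" proof
          assume "R = {}" hence "card R = 0" by simp
          thus False using cR tK by simp
        qed
        then obtain j where jR: "j \<in> R" by blast
        have "j \<in> {1..L} - T" using jR RL R_def by auto
        hence le: "mad_metric A (sum A R) j \<le> mad_metric A (sum A R) (xs ! t)" using mx by blast
        have l1: "Re (cinner (sum A R) (A j)) \<ge> 1 - (real (card R) - 1) * \<mu>" using lowb RL jR by blast
        have u1: "Re (cinner (sum A R) (A (xs!t))) \<le> real (card R) * \<mu>"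
          using upb RL step nS R_def by auto
        have "(2 * real (card R) - 1) * \<mu> \<le> (2 * real K - 1) * \<mu>"
          using cR mu_pos \<mu>_def tK by (intro mult_right_mono) auto
        hence "(2 * real (card R) - 1) * \<mu> < 1" using key by linarith
        thus False using le l1 u1 unfolding mad_metric_def by (simp add: algebra_simps)
      qed
      have tk: "take (Suc t) xs = take t xs @ [xs ! t]" using tK len by (simp add: take_Suc_conv_app_nth)
      show ?case using IH inS step tk T_def by auto
    qed
    from inv[of K] len have d: "distinct xs" and sub: "set xs \<subseteq> S" by auto
    have "card (set xs) = K" using d len by (simp add: distinct_card)
    hence "set xs = S" using card_subset_eq[OF finS sub] S_card by simp
    thus ?thesis using d by simp
  qed
  show ?thesis
  proof (intro conjI allI impI)
    show "\<exists>xs. mad_run A L y K xs"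
      using greedy_exists[OF KL, of K A y] unfolding mad_run_def by auto
  next
    fix xs assume run: "mad_run A L y K xs"
    have len: "length xs = K" using run mad_run_def by blast
    have c: "distinct xs" "set xs = S" using correct[OF run] by auto
    have xh: "mad_xhat xs K k = x k" for k
    proof -
      have "mad_xhat xs K k = (\<Sum>s\<in>S. std_basis s k)"
        unfolding mad_xhat_def using len c by (simp add: sum_list_distinct_conv_sum_set)
      also have "\<dots> = (\<Sum>s\<in>S. if s = k then 1 else 0)" unfolding std_basis_def by (rule sum.cong) auto
      also have "\<dots> = x k" using finS x_def by simp
      finally show ?thesis .
    qed
    show "\<forall>k\<in>{1..L}. mad_xhat xs K k = x k" using xh by simp
    show "mat_vec A L (mad_xhat xs K) = mat_vec A L x" using xh by (simp add: mat_vec_def)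
  qed
qed

end
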